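(* Let $(R,\mathfrak{m})$ be a commutative Artinian local ring with identity, $\mathfrak{m}\neq0$ and $\mathfrak{m}^2=0$. If $f\in R[x]$ is a GE polynomial of degree at least $2$, then $f$ is irreducible if and only if its constant term is nonzero.
   Context: A generalized Eisenstein (GE) polynomial is a nonconstant monic polynomial $x^d+f_{d-1}x^{d-1}+\dots+f_0\in R[x]$ with $f_i\in\mathfrak{m}$ for all $i<d$. A nonunit polynomial $f$ is irreducible if $f=gh$ implies $g$ or $h$ is a unit of $R[x]$. *)

theory Defs
  imports "HOL-Computational_Algebra.Polynomial" "HOL-Computational_Algebra.Factorial_Ring"
begin

definition is_ideal :: "'a::comm_ring_1 set \<Rightarrow> bool" where
  "is_ideal I \<longleftrightarrow> 0 \<in> I \<and> (\<forall>a\<in>I. \<forall>b\<in>I. a + b \<in> I) \<and> (\<forall>r. \<forall>a\<in>I. r * a \<in> I)"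

definition maximal_ideal :: "'a::comm_ring_1 set \<Rightarrow> bool" where
  "maximal_ideal M \<longleftrightarrow> is_ideal M \<and> M \<noteq> UNIV \<and>
     (\<forall>J. is_ideal J \<and> M \<subseteq> J \<longrightarrow> J = M \<or> J = UNIV)"

definition local_ring_with :: "'a::comm_ring_1 set \<Rightarrow> bool" where
  "local_ring_with M \<longleftrightarrow> maximal_ideal M \<and> (\<forall>N. maximal_ideal N \<longrightarrow> N = M)"

definition artinian :: "'a::comm_ring_1 itself \<Rightarrow> bool" where
  "artinian _ \<longleftrightarrow> (\<forall>I :: nat \<Rightarrow> 'a set. (\<forall>n. is_ideal (I n) \<and> I (Suc n) \<subseteq> I n)
      \<longrightarrow> (\<exists>N. \<forall>n\<ge>N. I n = I N))"

definition GE_poly :: "'a::comm_ring_1 set \<Rightarrow> 'a poly \<Rightarrow> bool" where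
  "GE_poly M f \<longleftrightarrow> degree f \<ge> 1 \<and> lead_coeff f = 1 \<and> (\<forall>i < degree f. coeff f i \<in> M)"

end

theory Submission
  imports Defs
begin

lemma id_add: "is_ideal M \<Longrightarrow> a \<in> M \<Longrightarrow> b \<in> M \<Longrightarrow> a + b \<in> M"
  by (simp add: is_ideal_def)
lemma id_multl: "is_ideal M \<Longrightarrow> a \<in> M \<Longrightarrow> r * a \<in> M"
  by (simp add: is_ideal_def)
lemma id_multr: "is_ideal M \<Longrightarrow> a \<in> M \<Longrightarrow> a * r \<in> M"
  by (metis id_multl mult.commute)
lemma id_neg: "is_ideal M \<Longrightarrow> a \<in> M \<Longrightarrow> - a \<in> M"
  by (metis id_multl mult_minus1)
lemma id_diff: "is_ideal M \<Longrightarrow> a \<in> M \<Longrightarrow> b \<in> M \<Longrightarrow> a - b \<in> M"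
  by (metis id_add id_neg diff_conv_add_uminus)

lemma id_sum: assumes I: "is_ideal M" and "finite S" "\<forall>i\<in>S. F i \<in> M" shows "sum F S \<in> M"
  using assms(2,3)
proof (induction S rule: finite_induct)
  case empty then show ?case using I by (simp add: is_ideal_def)
next
  case (insert x F) then show ?case by (simp add: id_add[OF I])
qed

lemma one_notin: "is_ideal M \<Longrightarrow> M \<noteq> UNIV \<Longrightarrow> (1::'a::comm_ring_1) \<notin> M"
  by (metis UNIV_eq_I id_multl mult.right_neutral)

lemma unit_out:
  fixes M :: "'a::comm_ring_1 set"
  assumes mx: "maximal_ideal M" and sq: "\<forall>a\<in>M. \<forall>b\<in>M. a * b = 0" and a: "a \<notin> M"
  shows "\<exists>c. a * c = 1"
proof -
  have I: "is_ideal M" using mx by (simp add: maximal_ideal_def)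
  define J where "J = {m + r * a | m r. m \<in> M}"
  have "is_ideal J"
    unfolding is_ideal_def J_def
  proof (intro conjI ballI allI)
    have "(0::'a) \<in> M" using I by (simp add: is_ideal_def)
    then show "0 \<in> {m + r * a |m r. m \<in> M}" by (intro CollectI exI[of _ 0] exI[of _ 0]) simp
  next
    fix x y assume "x \<in> {m + r * a |m r. m \<in> M}" "y \<in> {m + r * a |m r. m \<in> M}"
    then obtain m1 r1 m2 r2 where "x = m1 + r1 * a" "y = m2 + r2 * a" "m1 \<in> M" "m2 \<in> M" by blast
    then have "x + y = (m1+m2) + (r1+r2)*a" "m1 + m2 \<in> M" by (simp_all add: algebra_simps id_add[OF I])
    then show "x + y \<in> {m + r * a |m r. m \<in> M}" by blast
  next
    fix s x assume "x \<in> {m + r * a |m r. m \<in> M}"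
    then obtain m1 r1 where "x = m1 + r1 * a" "m1 \<in> M" by blast
    then have "s * x = (s*m1) + (s*r1)*a" "s*m1 \<in> M" by (simp_all add: algebra_simps id_multl[OF I] id_multr[OF I])
    then show "s * x \<in> {m + r * a |m r. m \<in> M}" by blast
  qed
  moreover have "M \<subseteq> J"
  proof
    fix x assume "x \<in> M"
    then show "x \<in> J" unfolding J_def by (intro CollectI exI[of _ x] exI[of _ 0]) simp
  qed
  moreover have "a \<in> J"
  proof -
    have "(0::'a) \<in> M" using I by (simp add: is_ideal_def)
    then show ?thesis unfolding J_def by (intro CollectI exI[of _ 0] exI[of _ 1]) simp
  qed
  moreover have "J \<noteq> M" using \<open>a \<in> J\<close> a by blast
  ultimately have "J = UNIV" using mx unfolding maximal_ideal_def by blast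
  then have "1 \<in> J" by simp
  then obtain m r where mr: "1 = m + r * a" "m \<in> M" unfolding J_def by blast
  have ra: "r * a = 1 - m" using mr(1) by (simp add: eq_diff_eq add.commute)
  have "a * (r * (1 + m)) = (r * a) * (1 + m)" by (simp add: ac_simps)
  also have "\<dots> = (1 - m) * (1 + m)" by (simp only: ra)
  also have "\<dots> = 1" using sq mr(2) by (simp add: algebra_simps)
  finally show ?thesis by blast
qed

lemma monic_not_unit:
  fixes p :: "'a::comm_ring_1 poly"
  assumes "(1::'a) \<noteq> 0" "lead_coeff p = 1" "degree p \<ge> 1"
  shows "\<not> p dvd 1"
proof
  assume "p dvd 1"
  then obtain q where q: "1 = p * q" by (auto simp: dvd_def)
  have "q \<noteq> 0" using q assms(1) by auto
  then have "coeff (p*q) (degree p + degree q) \<noteq> 0"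
    using assms by (simp add: coeff_mult_degree_sum)
  then have "degree p + degree q \<le> degree (p*q)" by (rule le_degree)
  then show False using q[symmetric] assms(3) by simp
qed

lemma unit_poly:
  fixes p :: "'a::comm_ring_1 poly"
  assumes I: "is_ideal M" and sq: "\<forall>a\<in>M. \<forall>b\<in>M. a * b = 0"
    and c: "coeff p 0 * c = 1" and hi: "\<forall>i>0. coeff p i \<in> M"
  shows "p dvd 1"
proof -
  define n where "n = p - [:coeff p 0:]"
  have cn: "coeff n i \<in> M" for i
    using hi I unfolding n_def by (cases i) (auto simp: is_ideal_def)
  have nn: "n * n = 0"
  proof (rule poly_eqI)
    fix k
    have "coeff (n*n) k = (\<Sum>i\<le>k. coeff n i * coeff n (k-i))" by (rule coeff_mult)
    also have "\<dots> = 0" using sq cn by simp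
    finally show "coeff (n*n) k = coeff 0 k" by simp
  qed
  have pe: "p = [:coeff p 0:] + n" unfolding n_def by simp
  have e1: "[:coeff p 0:] * [:c:] = 1" using c by (simp add: one_pCons mult.commute)
  have "c*c*coeff p 0 = c" using c by (metis mult.assoc mult.commute mult_1_right)
  then have e2: "[:coeff p 0:] * [:c*c:] = [:c:]" by (simp add: mult.commute)
  have "p * ([:c:] - [:c*c:] * n) = [:coeff p 0:] * [:c:] - ([:coeff p 0:] * [:c*c:]) * n + [:c:] * n - [:c*c:] * (n * n)"
    by (subst pe) (simp add: algebra_simps)
  also have "\<dots> = 1" by (simp only: e1 e2 nn mult_zero_right) simp
  finally show ?thesis by (metis dvdI)
qed

theorem corollary3p5:
  fixes M :: "'a::comm_ring_1 set" and f :: "'a poly"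
  assumes "artinian TYPE('a)"
    and "local_ring_with M"
    and "M \<noteq> {0}"
    and "\<forall>a\<in>M. \<forall>b\<in>M. a * b = 0"
    and "GE_poly M f"
    and "degree f \<ge> 2"
  shows "irreducible f \<longleftrightarrow> coeff f 0 \<noteq> 0"
proof -
  note sq = assms(4)
  have mx: "maximal_ideal M" using assms(2) by (simp add: local_ring_with_def)
  have I: "is_ideal M" and nU: "M \<noteq> UNIV" using mx by (auto simp: maximal_ideal_def)
  have one: "(1::'a) \<notin> M" by (rule one_notin[OF I nU])
  have z: "(0::'a) \<in> M" using I by (simp add: is_ideal_def)
  have onez: "(1::'a) \<noteq> 0" using one z by auto
  have ge: "lead_coeff f = 1" "\<forall>i < degree f. coeff f i \<in> M" using assms(5) by (auto simp: GE_poly_def)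
  have fnz: "f \<noteq> 0" using assms(6) by auto
  have fnu: "\<not> f dvd 1" using monic_not_unit[OF onez ge(1)] assms(6) by simp
  have isu: "\<exists>c. a * c = 1" if "a \<notin> M" for a using unit_out[OF mx sq that] .
  have nMmul: "a * b \<notin> M" if na: "a \<notin> M" and nb: "b \<notin> M" for a b
  proof
    assume ab: "a * b \<in> M"
    obtain c d where "a * c = 1" "b * d = 1" using isu na nb by blast
    then have "(a*b) * (c*d) = 1" by (metis mult.assoc mult.left_commute mult_1_right)
    then show False using id_multr[OF I ab, of "c*d"] one by simp
  qed
  have nMadd: "u + m \<notin> M" if "u \<notin> M" "m \<in> M" for u m
    using id_diff[OF I _ that(2), of "u+m"] that(1) by auto
  have key: "coeff (g*h) n \<notin> M"
    if "a \<le> n" "coeff g a \<notin> M" "coeff h (n-a) \<notin> M"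
       "\<forall>i\<le>n. i \<noteq> a \<longrightarrow> coeff g i * coeff h (n-i) \<in> M" for g h :: "'a poly" and n a
  proof -
    have "coeff (g*h) n = (\<Sum>i\<in>{..n}. coeff g i * coeff h (n-i))" by (rule coeff_mult)
    also have "\<dots> = coeff g a * coeff h (n-a) + (\<Sum>i\<in>{..n}-{a}. coeff g i * coeff h (n-i))"
      using that(1) by (subst sum.remove[of _ a]) auto
    moreover have "(\<Sum>i\<in>{..n}-{a}. coeff g i * coeff h (n-i)) \<in> M"
      using that(4) by (intro id_sum[OF I]) auto
    ultimately show ?thesis using nMadd[OF nMmul[OF that(2,3)]] by auto
  qed
  have fM: "k = degree f" if "coeff f k \<notin> M" for k
  proof (rule ccontr)
    assume "k \<noteq> degree f"
    then consider "k < degree f" | "k > degree f" by linarith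
    then show False using ge(2) that z by cases (auto simp: coeff_eq_0)
  qed
  show ?thesis
  proof
    assume irr: "irreducible f"
    show "coeff f 0 \<noteq> 0"
    proof
      assume c0: "coeff f 0 = 0"
      obtain a g where fg: "f = pCons a g" by (cases f)
      have a0: "a = 0" using c0 fg by simp
      have gnz: "g \<noteq> 0" using fg assms(6) a0 by auto
      have dg: "degree f = Suc (degree g)" using fg gnz by simp
      have lg: "lead_coeff g = 1" using ge(1) fg dg by simp
      have dg1: "degree g \<ge> 1" using dg assms(6) by simp
      have "f = [:0,1:] * g" using fg a0 by simp
      then have "[:0,1:] dvd (1::'a poly) \<or> g dvd 1" using irr by (auto simp: irreducible_def)
      moreover have "\<not> [:0,1:] dvd (1::'a poly)" using monic_not_unit[OF onez, of "[:0,1:]"] onez by simp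
      moreover have "\<not> g dvd 1" using monic_not_unit[OF onez lg dg1] .
      ultimately show False by blast
    qed
  next
    assume c0: "coeff f 0 \<noteq> 0"
    show "irreducible f"
      unfolding irreducible_def
    proof (intro conjI fnz fnu allI impI)
      fix g h assume fgh: "f = g * h"
      define NG where "NG = {i. coeff g i \<notin> M}"
      define NH where "NH = {i. coeff h i \<notin> M}"
      have fNG: "finite NG"
        by (rule finite_subset[of _ "{..degree g}"]) (auto simp: NG_def, metis coeff_eq_0 not_le z)
      have fNH: "finite NH"
        by (rule finite_subset[of _ "{..degree h}"]) (auto simp: NH_def, metis coeff_eq_0 not_le z)
      have allM: "coeff (g*h) k \<in> M" if "NG = {} \<or> NH = {}" for k
      proof -
        have "coeff (g*h) k = (\<Sum>i\<le>k. coeff g i * coeff h (k-i))" by (rule coeff_mult)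
        also have "\<dots> \<in> M"
          using that by (intro id_sum[OF I]) (auto simp: NG_def NH_def id_multl[OF I] id_multr[OF I])
        finally show ?thesis .
      qed
      have lf: "coeff (g*h) (degree f) \<notin> M" using ge(1) one fgh by simp
      have neG: "NG \<noteq> {}" and neH: "NH \<noteq> {}" using allM lf by blast+
      define r where "r = Min NG"
      define t where "t = Max NG"
      define s where "s = Min NH"
      define u where "u = Max NH"
      have rN: "r \<in> NG" "t \<in> NG" "s \<in> NH" "u \<in> NH" using fNG fNH neG neH
        by (auto simp: r_def t_def s_def u_def)
      have bl: "coeff g i \<in> M" if "i < r" for i
        using Min_le[OF fNG, of i] that unfolding r_def by (auto simp: NG_def)
      have bu: "coeff g i \<in> M" if "i > t" for i
        using Max_ge[OF fNG, of i] that unfolding t_def by (auto simp: NG_def)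
      have cl: "coeff h i \<in> M" if "i < s" for i
        using Min_le[OF fNH, of i] that unfolding s_def by (auto simp: NH_def)
      have cu: "coeff h i \<in> M" if "i > u" for i
        using Max_ge[OF fNH, of i] that unfolding u_def by (auto simp: NH_def)
      have rt: "r \<le> t" using rN fNG unfolding r_def t_def by (meson Max_ge Min_le order_trans)
      have su: "s \<le> u" using rN fNH unfolding s_def u_def by (meson Max_ge Min_le order_trans)
      have "coeff (g*h) (r+s) \<notin> M"
      proof (rule key[of r])
        show "coeff g r \<notin> M" "coeff h (r + s - r) \<notin> M" using rN by (auto simp: NG_def NH_def)
        show "\<forall>i\<le>r + s. i \<noteq> r \<longrightarrow> coeff g i * coeff h (r + s - i) \<in> M"
        proof (intro allI impI)
          fix i assume "i \<le> r + s" "i \<noteq> r"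
          then consider "i < r" | "r < i" "r + s - i < s" by linarith
          then show "coeff g i * coeff h (r + s - i) \<in> M"
            by cases (auto intro: id_multr[OF I] id_multl[OF I] bl cl)
        qed
      qed simp
      then have rs: "r + s = degree f" using fM fgh by simp
      have "coeff (g*h) (t+u) \<notin> M"
      proof (rule key[of t])
        show "coeff g t \<notin> M" "coeff h (t + u - t) \<notin> M" using rN by (auto simp: NG_def NH_def)
        show "\<forall>i\<le>t + u. i \<noteq> t \<longrightarrow> coeff g i * coeff h (t + u - i) \<in> M"
        proof (intro allI impI)
          fix i assume "i \<le> t + u" "i \<noteq> t"
          then consider "i < t" "t + u - i > u" | "t < i" by linarith
          then show "coeff g i * coeff h (t + u - i) \<in> M"
            by cases (auto intro: id_multr[OF I] id_multl[OF I] bu cu)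
        qed
      qed simp
      then have tu: "t + u = degree f" using fM fgh by simp
      have rt': "r = t" and su': "s = u" using rt su rs tu by linarith+
      have c00: "coeff f 0 = coeff g 0 * coeff h 0" using fgh by (simp add: coeff_mult)
      have "r = 0 \<or> s = 0"
      proof (rule ccontr)
        assume "\<not> (r = 0 \<or> s = 0)"
        then have "coeff g 0 \<in> M" "coeff h 0 \<in> M" using bl cl by auto
        then show False using sq c00 c0 by simp
      qed
      then show "g dvd 1 \<or> h dvd 1"
      proof
        assume "r = 0"
        then have t0: "t = 0" using rt' by simp
        obtain c where "coeff g 0 * c = 1" using isu rN(1) \<open>r = 0\<close> by (auto simp: NG_def)
        moreover have "\<forall>i>0. coeff g i \<in> M" using bu t0 by simp
        ultimately show ?thesis using unit_poly[OF I sq] by blast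
      next
        assume "s = 0"
        then have u0: "u = 0" using su' by simp
        obtain c where "coeff h 0 * c = 1" using isu rN(3) \<open>s = 0\<close> by (auto simp: NH_def)
        moreover have "\<forall>i>0. coeff h i \<in> M" using cu u0 by simp
        ultimately show ?thesis using unit_poly[OF I sq] by blast
      qed
    qed
  qed
qed


end
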